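(* Let $\mathcal R$ be a reaction network and $x,x'\in\mathbb{N}_0^n$. Then $x$ leads to $x'$ via $\mathcal R$ if and only if there is $(y,y')\in\mathrm{cl}(\mathcal R)$ with $x\ge y$ and $x'=x+y'-y$; equivalently, if and only if there is $(y,y')\in\mathrm{cl}(\mathcal R)$ with $(x,x')\ge(y,y')$ and $(x,x')\sim(y,y')$.
   Context: A reaction network (RN) is a (possibly infinite) subset $\mathcal R\subseteq\mathbb{N}_0^n\times\mathbb{N}_0^n$ containing no element $(y,y')$ with $y=y'$; elements $(y,y')$ are reactions $y\to y'$. Order on $\mathbb{Z}^n$ and on $\mathbb{N}_0^n\times\mathbb{N}_0^n$ is componentwise. For $r_1=(y_1,y_1'),\ r_2=(y_2,y_2')$ define $r_1\oplus r_2=(y_1+0\vee(y_2-y_1'),\ y_2'+0\vee(y_1'-y_2))$ ($\vee$ componentwise maximum); it is associative. For $A\subseteq\mathbb{N}_0^n\times\mathbb{N}_0^n$, $\mathrm{cl}(A)$ is the set of all finite $\oplus$-sums of elements of $A$ (repetitions allowed), including the empty sum $(0,0)$. $(y_1,y_1')\sim(y_2,y_2')$ means $y_1'-y_1=y_2'-y_2$. An ordered sequence of reactions $y_1\to y_1',\dots,y_m\to y_m'$ is active on $x\in\mathbb{N}_0^n$ if $x+\sum_{i=1}^{k-1}(y_i'-y_i)\ge y_k$ for all $k=1,\dots,m$. A state $x$ leads to $x'$ via $\mathcal R$ if there is an ordered sequence of $m\ge0$ reactions of $\mathcal R$ (repetitions allowed) active on $x$ with $x'=x+\sum_{i=1}^m(y_i'-y_i)$.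 *)

theory Defs
  imports Main
begin

text \<open>States in N_0^n are modelled as functions 'i \<Rightarrow> nat for a finite index type 'i
  (n = CARD('i)). A reaction is a pair (y, y') of states. Order is pointwise.\<close>

type_synonym 'i state = "'i \<Rightarrow> nat"
type_synonym 'i reaction = "'i state \<times> 'i state"

definition reaction_network :: "'i reaction set \<Rightarrow> bool" where
  "reaction_network R \<longleftrightarrow> (\<forall>(y, y') \<in> R. y \<noteq> y')"

definition rvec :: "'i reaction \<Rightarrow> 'i \<Rightarrow> int" where
  "rvec r = (\<lambda>i. int (snd r i) - int (fst r i))"

text \<open>r1 \<oplus> r2 = (y1 + 0 \<or> (y2 - y1'), y2' + 0 \<or> (y1' - y2)); truncated nat subtraction
  is exactly 0 \<or> (a - b).\<close>
definition rplus :: "'i reaction \<Rightarrow> 'i reaction \<Rightarrow> 'i reaction" where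
  "rplus r1 r2 = (\<lambda>i. fst r1 i + (fst r2 i - snd r1 i), \<lambda>i. snd r2 i + (snd r1 i - fst r2 i))"

definition cl :: "'i reaction set \<Rightarrow> 'i reaction set" where
  "cl A = {foldr rplus rs (\<lambda>_. 0, \<lambda>_. 0) | rs. set rs \<subseteq> A}"

definition rsim :: "'i reaction \<Rightarrow> 'i reaction \<Rightarrow> bool" where
  "rsim r1 r2 \<longleftrightarrow> rvec r1 = rvec r2"

definition active :: "'i reaction list \<Rightarrow> 'i state \<Rightarrow> bool" where
  "active rs x \<longleftrightarrow> (\<forall>k < length rs. \<forall>j.
      int (x j) + (\<Sum>i<k. rvec (rs ! i) j) \<ge> int (fst (rs ! k) j))"

definition leads_to :: "'i reaction set \<Rightarrow> 'i state \<Rightarrow> 'i state \<Rightarrow> bool" where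
  "leads_to R x x' \<longleftrightarrow> (\<exists>rs. set rs \<subseteq> R \<and> active rs x \<and>
      (\<forall>j. int (x' j) = int (x j) + (\<Sum>i<length rs. rvec (rs ! i) j)))"

end

theory Submission
  imports Defs
begin

abbreviation F :: "'i reaction list \<Rightarrow> 'i reaction" where
  "F rs \<equiv> foldr rplus rs (\<lambda>_. 0, \<lambda>_. 0)"

lemma sum_shift: "(\<Sum>i<Suc k. f ((r#rs)!i)) = f r + (\<Sum>i<k. f (rs!i))"
  by (subst sum.lessThan_Suc_shift) simp

lemma active_Cons:
  "active (r#rs) x \<longleftrightarrow> fst r \<le> x \<and> active rs (\<lambda>j. x j - fst r j + snd r j)"
proof
  assume A: "active (r#rs) x"
  have le: "fst r \<le> x"
  proof (rule le_funI)
    fix j show "fst r j \<le> x j" using A[unfolded active_def, rule_format, of 0 j] by simp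
  qed
  moreover have "active rs (\<lambda>j. x j - fst r j + snd r j)"
    unfolding active_def
  proof (intro allI impI)
    fix k j assume k: "k < length rs"
    have "int (x j) + (\<Sum>i<Suc k. rvec ((r#rs) ! i) j) \<ge> int (fst ((r#rs) ! Suc k) j)"
      using A k unfolding active_def by auto
    moreover have "(\<Sum>i<Suc k. rvec ((r#rs) ! i) j) = rvec r j + (\<Sum>i<k. rvec (rs ! i) j)"
      using sum_shift[where f="\<lambda>q. rvec q j" and k=k and r=r and rs=rs] by simp
    moreover have "fst r j \<le> x j" using le by (simp add: le_fun_def)
    ultimately show "int (x j - fst r j + snd r j) + (\<Sum>i<k. rvec (rs ! i) j) \<ge> int (fst (rs ! k) j)"
      by (simp add: rvec_def of_nat_diff)
  qed
  ultimately show "fst r \<le> x \<and> active rs (\<lambda>j. x j - fst r j + snd r j)" by blast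
next
  assume B: "fst r \<le> x \<and> active rs (\<lambda>j. x j - fst r j + snd r j)"
  show "active (r#rs) x" unfolding active_def
  proof (intro allI impI)
    fix k j assume k: "k < length (r#rs)"
    have lej: "fst r j \<le> x j" using B by (simp add: le_fun_def)
    show "int (x j) + (\<Sum>i<k. rvec ((r#rs) ! i) j) \<ge> int (fst ((r#rs) ! k) j)"
    proof (cases k)
      case 0 then show ?thesis using lej by simp
    next
      case (Suc k')
      have "int (x j - fst r j + snd r j) + (\<Sum>i<k'. rvec (rs ! i) j) \<ge> int (fst (rs ! k') j)"
        using B k Suc unfolding active_def by auto
      moreover have "(\<Sum>i<Suc k'. rvec ((r#rs) ! i) j) = rvec r j + (\<Sum>i<k'. rvec (rs ! i) j)"
        using sum_shift[where f="\<lambda>q. rvec q j" and k=k' and r=r and rs=rs] by simp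
      ultimately show ?thesis using Suc lej by (simp add: rvec_def of_nat_diff)
    qed
  qed
qed

lemma key:
  "(\<forall>x. active rs x \<longleftrightarrow> fst (F rs) \<le> x) \<and>
   (\<forall>j. (\<Sum>i<length rs. rvec (rs ! i) j) = rvec (F rs) j)"
proof (induction rs)
  case Nil
  then show ?case by (simp add: active_def rvec_def le_fun_def)
next
  case (Cons r rs)
  obtain c d where cd: "F rs = (c, d)" by fastforce
  have FC: "F (r#rs) = (\<lambda>i. fst r i + (c i - snd r i), \<lambda>i. d i + (snd r i - c i))"
    by (simp add: cd rplus_def)
  have A: "\<forall>x. active (r#rs) x \<longleftrightarrow> fst (F (r#rs)) \<le> x"
  proof
    fix x
    have "active (r#rs) x \<longleftrightarrow> fst r \<le> x \<and> c \<le> (\<lambda>j. x j - fst r j + snd r j)"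
      using active_Cons[of r rs x] Cons.IH cd by simp
    also have "\<dots> \<longleftrightarrow> fst (F (r#rs)) \<le> x"
    proof -
      have pt: "\<And>j. (fst r j \<le> x j \<and> c j \<le> x j - fst r j + snd r j) \<longleftrightarrow> fst r j + (c j - snd r j) \<le> x j"
        by arith
      show ?thesis unfolding FC le_fun_def fst_conv all_conj_distrib[symmetric] by (simp only: pt)
    qed
    finally show "active (r#rs) x \<longleftrightarrow> fst (F (r#rs)) \<le> x" .
  qed
  have S: "\<forall>j. (\<Sum>i<length (r#rs). rvec ((r#rs) ! i) j) = rvec (F (r#rs)) j"
  proof
    fix j
    have "(\<Sum>i<length (r#rs). rvec ((r#rs) ! i) j) = rvec r j + (\<Sum>i<length rs. rvec (rs ! i) j)"
      using sum_shift[where f="\<lambda>q. rvec q j" and k="length rs" and r=r and rs=rs] by simp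
    also have "\<dots> = rvec r j + rvec (c, d) j" using Cons.IH cd by simp
    also have "\<dots> = rvec (F (r#rs)) j" unfolding FC rvec_def by auto
    finally show "(\<Sum>i<length (r#rs). rvec ((r#rs) ! i) j) = rvec (F (r#rs)) j" .
  qed
  show ?case using A S by blast
qed

lemma first:
  "leads_to R x x' \<longleftrightarrow>
           (\<exists>(y, y') \<in> cl R. y \<le> x \<and> (\<forall>j. int (x' j) = int (x j) + int (y' j) - int (y j)))"
proof
  assume "leads_to R x x'"
  then obtain rs where rs: "set rs \<subseteq> R" "active rs x"
    "\<forall>j. int (x' j) = int (x j) + (\<Sum>i<length rs. rvec (rs ! i) j)"
    unfolding leads_to_def by blast
  obtain y y' where yy: "F rs = (y, y')" by fastforce
  have "(y, y') \<in> cl R" using rs(1) yy[symmetric] unfolding cl_def by blast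
  moreover have "y \<le> x" using key[of rs] rs(2) yy by auto
  moreover have "\<forall>j. int (x' j) = int (x j) + int (y' j) - int (y j)"
    using key[of rs] rs(3) yy by (simp add: rvec_def)
  ultimately show "\<exists>(y, y') \<in> cl R. y \<le> x \<and> (\<forall>j. int (x' j) = int (x j) + int (y' j) - int (y j))"
    by blast
next
  assume "\<exists>(y, y') \<in> cl R. y \<le> x \<and> (\<forall>j. int (x' j) = int (x j) + int (y' j) - int (y j))"
  then obtain y y' where h: "(y, y') \<in> cl R" "y \<le> x" "\<forall>j. int (x' j) = int (x j) + int (y' j) - int (y j)"
    by blast
  then obtain rs where rs: "set rs \<subseteq> R" "F rs = (y, y')" unfolding cl_def by auto
  have "active rs x" using key[of rs] rs(2) h(2) by auto
  moreover have "\<forall>j. int (x' j) = int (x j) + (\<Sum>i<length rs. rvec (rs ! i) j)"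
    using key[of rs] rs(2) h(3) by (simp add: rvec_def)
  ultimately show "leads_to R x x'" unfolding leads_to_def using rs(1) by blast
qed

theorem lemma3p3:
  fixes R :: "('i::finite) reaction set" and x x' :: "'i state"
  assumes "reaction_network R"
  shows "(leads_to R x x' \<longleftrightarrow>
           (\<exists>(y, y') \<in> cl R. y \<le> x \<and> (\<forall>j. int (x' j) = int (x j) + int (y' j) - int (y j))))
       \<and> (leads_to R x x' \<longleftrightarrow>
           (\<exists>(y, y') \<in> cl R. y \<le> x \<and> y' \<le> x' \<and> rsim (x, x') (y, y')))"
proof -
  have eq: "(y \<le> x \<and> (\<forall>j. int (x' j) = int (x j) + int (y' j) - int (y j))) \<longleftrightarrow>
            (y \<le> x \<and> y' \<le> x' \<and> rsim (x, x') (y, y'))" for y y' :: "'i state"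
  proof
    assume a: "y \<le> x \<and> (\<forall>j. int (x' j) = int (x j) + int (y' j) - int (y j))"
    have "y' \<le> x'" unfolding le_fun_def
    proof
      fix j have "y j \<le> x j" using a by (simp add: le_fun_def)
      then show "y' j \<le> x' j" using a[THEN conjunct2, rule_format, of j] by linarith
    qed
    moreover have "rsim (x, x') (y, y')" unfolding rsim_def rvec_def using a by auto
    ultimately show "y \<le> x \<and> y' \<le> x' \<and> rsim (x, x') (y, y')" using a by blast
  next
    assume a: "y \<le> x \<and> y' \<le> x' \<and> rsim (x, x') (y, y')"
    then have d: "\<forall>j. int (x' j) - int (x j) = int (y' j) - int (y j)"
      unfolding rsim_def rvec_def by (simp add: fun_eq_iff)
    have "\<forall>j. int (x' j) = int (x j) + int (y' j) - int (y j)"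
    proof
      fix j show "int (x' j) = int (x j) + int (y' j) - int (y j)" using d[rule_format, of j] by linarith
    qed
    then show "y \<le> x \<and> (\<forall>j. int (x' j) = int (x j) + int (y' j) - int (y j))"
      using a by blast
  qed
  show ?thesis using first[of R x x'] eq by auto
qed

end
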